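(* Let $\mathbf{y}\in\mathbb{R}^n$ and $\mathbf{X}=(\mathbf{x}_1,\ldots,\mathbf{x}_p)\in\mathbb{R}^{n\times p}$ satisfy $\sum_{i=1}^n y_i=0$, and for every $j$, $\sum_{i=1}^n x_{ij}=0$ and $\frac1n\sum_{i=1}^n x_{ij}^2=1$. Let $\alpha\in(0,1]$ and for $\lambda>0$ let $$\widehat{\boldsymbol\beta}(\lambda,\alpha)=\operatorname*{argmin}_{\boldsymbol\beta\in\mathbb{R}^p}\ \frac{1}{2n}\|\mathbf{y}-\mathbf{X}\boldsymbol\beta\|^2+\alpha\lambda\|\boldsymbol\beta\|_1+\frac{(1-\alpha)\lambda}{2}\|\boldsymbol\beta\|^2 .$$ Let $\lambda_m=\max_j\left|\frac{\mathbf{x}_j^T\mathbf{y}}{\alpha n}\right|$ and $\mathbf{x}_*=\operatorname*{argmax}_{\mathbf{x}_j}|\mathbf{x}_j^T\mathbf{y}|$. Then for any $\lambda\in(0,\lambda_m]$ and any $\mathbf{x}_j\neq\mathbf{x}_*$, we have $\widehat{\beta}_j(\lambda,\alpha)=0$ if $$\left|(\lambda_m+\lambda)\mathbf{x}_j^T\mathbf{y}-(\lambda_m-\lambda)\frac{\mathrm{sign}(\mathbf{x}_*^T\mathbf{y})\,\alpha\lambda_m}{1+\lambda(1-\alpha)}\mathbf{x}_j^T\mathbf{x}_*\right|<2n\alpha\lambda\lambda_m-(\lambda_m-\lambda)\sqrt{n\|\mathbf{y}\|^2(1+\lambda(1-\alpha))-n^2\alpha^2\lambda_m^2}.$$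
   Context: $\|\cdot\|$ is the Euclidean norm and $\|\cdot\|_1$ the $\ell_1$ norm; $\widehat{\beta}_j(\lambda,\alpha)$ is the $j$th coordinate of the elastic net solution. *)

theory Defs
  imports "HOL-Analysis.Analysis"
begin

text \<open>Data: y in R^n (type real^'n), design matrix X in R^(n x p) (type real^'p^'n,
  rows indexed by 'n, columns by 'p); the j-th column x_j is column j X.\<close>

definition l1norm :: "real^'p \<Rightarrow> real" where
  "l1norm b = (\<Sum>k\<in>UNIV. \<bar>b $ k\<bar>)"

definition enet_obj :: "real^'p^'n \<Rightarrow> real^'n \<Rightarrow> real \<Rightarrow> real \<Rightarrow> real^'p \<Rightarrow> real" where
  "enet_obj X y lam alpha b =
     1 / (2 * real CARD('n)) * (norm (y - X *v b))^2
     + alpha * lam * l1norm b + (1 - alpha) * lam / 2 * (norm b)^2"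

definition enet_solution :: "real^'p^'n \<Rightarrow> real^'n \<Rightarrow> real \<Rightarrow> real \<Rightarrow> real^'p \<Rightarrow> bool" where
  "enet_solution X y lam alpha b \<longleftrightarrow> (\<forall>c. enet_obj X y lam alpha b \<le> enet_obj X y lam alpha c)"

definition lambda_max :: "real^'p^'n \<Rightarrow> real^'n \<Rightarrow> real \<Rightarrow> real" where
  "lambda_max X y alpha = Max (range (\<lambda>j. \<bar>(column j X \<bullet> y) / (alpha * real CARD('n))\<bar>))"

end

theory Submission
  imports Defs
begin


lemma l1_step: "l1norm (b + t *\<^sub>R axis k 1) = l1norm b + (\<bar>b$k + t\<bar> - \<bar>b$k\<bar>)"
proof -
  have "l1norm (b + t *\<^sub>R axis k 1) = \<bar>b$k + t\<bar> + (\<Sum>i\<in>UNIV-{k}. \<bar>b$i\<bar>)"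
    unfolding l1norm_def by (simp add: sum.remove[of UNIV k] axis_def)
  moreover have "l1norm b = \<bar>b$k\<bar> + (\<Sum>i\<in>UNIV-{k}. \<bar>b$i\<bar>)"
    unfolding l1norm_def by (simp add: sum.remove[of UNIV k])
  ultimately show ?thesis by simp
qed

lemma norm_step: "(norm (b + t *\<^sub>R axis k 1))^2 = (norm b)^2 + 2*t*(b$k) + t^2"
  unfolding power2_norm_eq_inner
  by (simp add: inner_add_left inner_add_right inner_axis inner_axis' inner_axis_axis inner_commute power2_eq_square algebra_simps)

lemma res_step:
  fixes X :: "real^'p^'n"
  assumes "column k X \<bullet> column k X = real CARD('n)"
  shows "(norm (y - X *v (b + t *\<^sub>R axis k 1)))^2 = (norm (y - X *v b))^2 - 2*t*(column k X \<bullet> (y - X *v b)) + t^2 * real CARD('n)"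
proof -
  have e: "y - X *v (b + t *\<^sub>R axis k 1) = (y - X *v b) - t *\<^sub>R column k X"
    by (simp add: algebra_simps matrix_vector_mult_basis)
  have q: "\<And>r c :: real^'n. (norm (r - t *\<^sub>R c))^2 = (norm r)^2 - 2*t*(c \<bullet> r) + t^2*(c \<bullet> c)"
    unfolding power2_norm_eq_inner
    by (simp add: inner_diff_left inner_diff_right inner_commute power2_eq_square algebra_simps)
  show ?thesis unfolding e q assms by simp
qed

lemma obj_step:
  fixes X :: "real^'p^'n"
  assumes "column k X \<bullet> column k X = real CARD('n)"
  shows "enet_obj X y lam alpha (b + t *\<^sub>R axis k 1) = enet_obj X y lam alpha b
     + (- t * ((column k X \<bullet> (y - X *v b)) / real CARD('n) - (1-alpha)*lam*(b$k))
        + (1 + (1-alpha)*lam)/2 * t^2 + alpha*lam*(\<bar>b$k + t\<bar> - \<bar>b$k\<bar>))"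
  unfolding enet_obj_def res_step[OF assms] l1_step norm_step
  by (simp add: field_simps)

lemma scal1:
  fixes g a C :: real
  assumes C: "C > 0" and h: "\<And>t. 0 \<le> - t*g + C*t^2 + a*\<bar>t\<bar>"
  shows "\<bar>g\<bar> \<le> a"
proof (rule ccontr)
  assume "\<not> \<bar>g\<bar> \<le> a"
  then have pos: "\<bar>g\<bar> - a > 0" by simp
  define e where "e = (\<bar>g\<bar> - a) / (2*C)"
  have e0: "e > 0" using pos C by (simp add: e_def)
  have key: "- e*\<bar>g\<bar> + C*e^2 + a*e < 0"
  proof -
    have "- e*\<bar>g\<bar> + C*e^2 + a*e = e * (C*e - (\<bar>g\<bar> - a))" by (simp add: algebra_simps power2_eq_square)
    also have "C*e = (\<bar>g\<bar> - a)/2" using C by (simp add: e_def)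
    finally show ?thesis using e0 pos by (simp add: mult_pos_neg)
  qed
  show False
  proof (cases "g \<ge> 0")
    case True
    from h[of e] have "0 \<le> - e*g + C*e^2 + a*e" using e0 by simp
    then show False using key True by simp
  next
    case False
    from h[of "-e"] have "0 \<le> e*g + C*e^2 + a*e" using e0 by simp
    then show False using key False by simp
  qed
qed

lemma scal2:
  fixes h C d :: real
  assumes C: "C > 0" and d: "d > 0" and hh: "\<And>t. \<bar>t\<bar> < d \<Longrightarrow> 0 \<le> - t*h + C*t^2"
  shows "h = 0"
proof (rule ccontr)
  assume hn: "h \<noteq> 0"
  define e where "e = min (d/2) (\<bar>h\<bar>/(2*C))"
  have e0: "e > 0" using hn C d by (simp add: e_def)
  have ed: "e < d" using d by (simp add: e_def)
  have Ce: "C*e \<le> \<bar>h\<bar>/2" using C by (simp add: e_def min_def field_simps)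
  have key: "- e*\<bar>h\<bar> + C*e^2 < 0"
  proof -
    have "- e*\<bar>h\<bar> + C*e^2 = e * (C*e - \<bar>h\<bar>)" by (simp add: algebra_simps power2_eq_square)
    moreover have "C*e - \<bar>h\<bar> < 0" using Ce hn by simp
    ultimately show ?thesis using e0 by (simp add: mult_pos_neg)
  qed
  show False
  proof (cases "h \<ge> 0")
    case True
    from hh[of e] have "0 \<le> - e*h + C*e^2" using e0 ed by simp
    then show False using key True by simp
  next
    case False
    from hh[of "-e"] have "0 \<le> e*h + C*e^2" using e0 ed by simp
    then show False using key False by simp
  qed
qed


lemma kkt:
  fixes X :: "real^'p^'n"
  assumes sol: "enet_solution X y lam alpha b"
    and col: "column k X \<bullet> column k X = real CARD('n)"
    and lam: "lam > 0" and al: "alpha > 0" "alpha \<le> 1"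
  defines "g \<equiv> (column k X \<bullet> (y - X *v b)) / real CARD('n) - (1-alpha)*lam*(b$k)"
  shows "\<bar>g\<bar> \<le> alpha*lam" and "b$k \<noteq> 0 \<Longrightarrow> g = alpha*lam * sgn(b$k)"
proof -
  define C where "C = (1 + (1-alpha)*lam)/2"
  have C: "C > 0" using lam al by (simp add: C_def add_pos_nonneg)
  have D: "\<And>t. 0 \<le> - t*g + C*t^2 + alpha*lam*(\<bar>b$k + t\<bar> - \<bar>b$k\<bar>)"
  proof -
    fix t
    have "enet_obj X y lam alpha b \<le> enet_obj X y lam alpha (b + t *\<^sub>R axis k 1)"
      using sol unfolding enet_solution_def by blast
    then show "0 \<le> - t*g + C*t^2 + alpha*lam*(\<bar>b$k + t\<bar> - \<bar>b$k\<bar>)"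
      unfolding obj_step[OF col] g_def C_def by linarith
  qed
  show "\<bar>g\<bar> \<le> alpha*lam"
  proof (rule scal1[OF C])
    fix t
    have "alpha*lam*(\<bar>b$k + t\<bar> - \<bar>b$k\<bar>) \<le> alpha*lam*\<bar>t\<bar>"
      using lam al by (intro mult_left_mono) (auto simp: abs_triangle_ineq4)
    then show "0 \<le> - t*g + C*t^2 + alpha*lam*\<bar>t\<bar>" using D[of t] by linarith
  qed
  assume bk: "b$k \<noteq> 0"
  have "g - alpha*lam * sgn(b$k) = 0"
  proof (rule scal2[OF C])
    show "\<bar>b$k\<bar> > 0" using bk by simp
    fix t assume t: "\<bar>t\<bar> < \<bar>b$k\<bar>"
    have "\<bar>b$k + t\<bar> - \<bar>b$k\<bar> = sgn(b$k) * t"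
      using t bk by (cases "b$k > 0"; cases "t < 0") (simp_all add: abs_if)
    then show "0 \<le> - t*(g - alpha*lam * sgn(b$k)) + C*t^2" using D[of t] by (simp add: algebra_simps)
  qed
  then show "g = alpha*lam * sgn(b$k)" by simp
qed



lemma geo:
  fixes Th Ts d dp g w :: "'a::real_inner"
  assumes obt: "inner (Ts + d - Th) (Ts - Th) \<le> 0"
    and half: "inner g (Th - Ts) \<le> 0"
    and dd: "d = c *\<^sub>R g + dp" and orth: "inner g dp = 0" and c: "c \<ge> 0"
  shows "\<bar>inner w (2 *\<^sub>R Th)\<bar> \<le> \<bar>inner w (2 *\<^sub>R Ts + dp)\<bar> + norm w * norm dp"
proof -
  define u where "u = Th - Ts"
  have "inner (d - u) (- u) \<le> 0" using obt unfolding u_def by (simp add: algebra_simps)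
  then have 1: "inner u u \<le> inner d u" by (simp add: inner_diff_left)
  have "inner d u = c * inner g u + inner dp u" unfolding dd by (simp add: inner_add_left)
  also have "\<dots> \<le> inner dp u" using c half unfolding u_def by (simp add: mult_nonneg_nonpos)
  finally have 2: "inner u u \<le> inner dp u" using 1 by linarith
  have "(norm (2 *\<^sub>R u - dp))^2 = 4 * inner u u - 4 * inner dp u + (norm dp)^2"
    unfolding power2_norm_eq_inner by (simp add: inner_diff_left inner_diff_right inner_commute)
  also have "\<dots> \<le> (norm dp)^2" using 2 by linarith
  finally have 3: "norm (2 *\<^sub>R u - dp) \<le> norm dp" using power2_le_imp_le by force
  have "2 *\<^sub>R Th = (2 *\<^sub>R Ts + dp) + (2 *\<^sub>R u - dp)" unfolding u_def by (simp add: algebra_simps)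
  then have "inner w (2 *\<^sub>R Th) = inner w (2 *\<^sub>R Ts + dp) + inner w (2 *\<^sub>R u - dp)"
    by (metis inner_add_right)
  moreover have "\<bar>inner w (2 *\<^sub>R u - dp)\<bar> \<le> norm w * norm dp"
    using Cauchy_Schwarz_ineq2[of w "2 *\<^sub>R u - dp"] 3 by (meson mult_left_mono norm_ge_zero order_trans)
  ultimately show ?thesis by linarith
qed

lemma Xb_inner:
  fixes X :: "real^'p^'n"
  shows "(X *v b) \<bullet> v = (\<Sum>k\<in>UNIV. b$k * (column k X \<bullet> v))"
  unfolding matrix_mult_sum scalar_mult_eq_scaleR inner_sum_left by simp



theorem theorem4p1:
  fixes y :: "real^'n" and X :: "real^'p^'n"
    and alpha lam :: real and jstar j :: 'p and b :: "real^'p"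
  assumes y_centered: "(\<Sum>i\<in>UNIV. y $ i) = 0"
    and X_centered: "\<And>k. (\<Sum>i\<in>UNIV. X $ i $ k) = 0"
    and X_scaled: "\<And>k. (1 / real CARD('n)) * (\<Sum>i\<in>UNIV. (X $ i $ k)^2) = 1"
    and alpha: "0 < alpha" "alpha \<le> 1"
    and jstar: "\<And>k. \<bar>column k X \<bullet> y\<bar> \<le> \<bar>column jstar X \<bullet> y\<bar>"
    and lam: "0 < lam" "lam \<le> lambda_max X y alpha"
    and j_ne: "column j X \<noteq> column jstar X"
    and sol: "enet_solution X y lam alpha b"
    and rule: "\<bar>(lambda_max X y alpha + lam) * (column j X \<bullet> y)
               - (lambda_max X y alpha - lam)
                 * (sgn (column jstar X \<bullet> y) * alpha * lambda_max X y alpha / (1 + lam * (1 - alpha)))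
                 * (column j X \<bullet> column jstar X)\<bar>
             < 2 * real CARD('n) * alpha * lam * lambda_max X y alpha
               - (lambda_max X y alpha - lam)
                 * sqrt (real CARD('n) * (norm y)^2 * (1 + lam * (1 - alpha))
                         - (real CARD('n))^2 * alpha^2 * (lambda_max X y alpha)^2)"
  shows "b $ j = 0"
proof (rule ccontr)
  assume bj: "b $ j \<noteq> 0"
  define N where "N = real CARD('n)"
  define L where "L = lam * (1 - alpha)"
  define lm where "lm = lambda_max X y alpha"
  define xs where "xs = column jstar X"
  define r where "r = y - X *v b"
  define g where "g k = (column k X \<bullet> r) / N - (1-alpha)*lam*(b$k)" for k
  have N0: "N > 0" unfolding N_def by simp
  have L0: "L \<ge> 0" unfolding L_def using lam alpha by simp
  have L1: "1 + L \<noteq> 0" using L0 by linarith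
  have NL: "N * (1 + L) > 0" using N0 L0 by simp
  have jj: "j \<noteq> jstar" using j_ne by auto
  have col: "column k X \<bullet> column k X = N" for k
  proof -
    have "column k X \<bullet> column k X = (\<Sum>i\<in>UNIV. (X $ i $ k)^2)"
      unfolding inner_vec_def column_def by (simp add: power2_eq_square)
    then show ?thesis using X_scaled[of k] N0 unfolding N_def by (simp add: field_simps)
  qed
  have gk: "\<bar>g k\<bar> \<le> alpha*lam" for k
    using kkt(1)[OF sol col[unfolded N_def] lam(1) alpha] unfolding g_def r_def N_def by simp
  have gs: "b$k * g k = alpha*lam*\<bar>b$k\<bar>" for k
  proof (cases "b$k = 0")
    case False
    then have "g k = alpha*lam * sgn (b$k)"
      using kkt(2)[OF sol col[unfolded N_def] lam(1) alpha] unfolding g_def r_def N_def by simp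
    then show ?thesis by (simp add: abs_sgn algebra_simps)
  qed simp
  have gj: "\<bar>g j\<bar> = alpha*lam"
  proof -
    have "g j = alpha*lam * sgn (b$j)"
      using kkt(2)[OF sol col[unfolded N_def] lam(1) alpha] bj unfolding g_def r_def N_def by simp
    then show ?thesis using bj alpha lam by (simp add: abs_mult)
  qed
  have lm_eq: "lm = \<bar>xs \<bullet> y\<bar> / (alpha * N)"
  proof -
    have "lm = Max (range (\<lambda>k. \<bar>(column k X \<bullet> y) / (alpha * N)\<bar>))"
      unfolding lm_def lambda_max_def N_def by simp
    also have "\<dots> = \<bar>(xs \<bullet> y) / (alpha * N)\<bar>"
    proof (rule Max_eqI)
      fix z assume "z \<in> range (\<lambda>k. \<bar>(column k X \<bullet> y) / (alpha * N)\<bar>)"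
      then obtain k where "z = \<bar>(column k X \<bullet> y) / (alpha * N)\<bar>" by auto
      then show "z \<le> \<bar>(xs \<bullet> y) / (alpha * N)\<bar>"
        using jstar[of k] alpha N0 unfolding xs_def by (simp add: abs_div divide_right_mono)
    qed (auto simp: xs_def)
    finally show ?thesis using alpha N0 by (simp add: abs_div)
  qed
  have lmpos: "lm > 0" using lam unfolding lm_def by linarith
  have absxy: "\<bar>xs \<bullet> y\<bar> = alpha * N * lm" using lm_eq alpha N0 by simp
  have bound: "\<bar>column k X \<bullet> y\<bar> \<le> alpha * N * lm" for k
    using jstar[of k] absxy unfolding xs_def by simp
  define s where "s = sgn (xs \<bullet> y)"
  have xy0: "xs \<bullet> y \<noteq> 0" using absxy alpha N0 lmpos by auto
  have s2: "s * s = 1" using xy0 unfolding s_def by (simp add: sgn_if)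
  have sxy: "s * (xs \<bullet> y) = alpha * N * lm" using absxy unfolding s_def by (auto simp: sgn_if abs_if)
  have xy_eq: "xs \<bullet> y = s * (alpha * N * lm)"
    using sxy s2 by (metis mult.assoc mult_1)
  define \<sigma> where "\<sigma> = sqrt (N * L)"
  have \<sigma>2: "\<sigma> * \<sigma> = N * L" unfolding \<sigma>_def using N0 L0 by simp
  define xt :: "'p \<Rightarrow> (real^'n) \<times> (real^'p)" where "xt k = (column k X, \<sigma> *\<^sub>R axis k 1)" for k
  define yt :: "(real^'n) \<times> (real^'p)" where "yt = (y, 0)"
  define rt :: "(real^'n) \<times> (real^'p)" where "rt = (r, - \<sigma> *\<^sub>R b)"
  have xr: "xt k \<bullet> rt = N * g k" for k
  proof -
    have "xt k \<bullet> rt = column k X \<bullet> r - (\<sigma> * \<sigma>) * b$k"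
      unfolding xt_def rt_def by (simp add: inner_axis')
    moreover have "N * g k = column k X \<bullet> r - N * L * b$k"
      unfolding g_def L_def using N0 by (simp add: field_simps)
    ultimately show ?thesis unfolding \<sigma>2 by simp
  qed
  have xy: "xt k \<bullet> yt = column k X \<bullet> y" for k
    unfolding xt_def yt_def by simp
  have xx: "xt k \<bullet> xt k = N * (1 + L)" for k
    unfolding xt_def using col[of k] \<sigma>2 by (simp add: inner_axis_axis algebra_simps)
  have xjs: "xt j \<bullet> xt jstar = column j X \<bullet> xs"
    unfolding xt_def xs_def using jj by (simp add: inner_axis_axis)
  define A where "A = yt - rt"
  have Ay: "A \<bullet> yt = (\<Sum>k\<in>UNIV. b$k * (column k X \<bullet> y))"
    unfolding A_def yt_def rt_def r_def by (simp add: Xb_inner)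
  have Ar: "A \<bullet> rt = (\<Sum>k\<in>UNIV. b$k * (N * g k))"
  proof -
    have "A \<bullet> rt = (X *v b) \<bullet> r - (\<sigma> * \<sigma>) * (b \<bullet> b)"
      unfolding A_def yt_def rt_def r_def by (simp add: algebra_simps)
    also have "\<dots> = (\<Sum>k\<in>UNIV. b$k * (column k X \<bullet> r)) - (\<Sum>k\<in>UNIV. N * L * (b$k * b$k))"
      unfolding Xb_inner \<sigma>2 by (simp add: inner_vec_def sum_distrib_left)
    also have "\<dots> = (\<Sum>k\<in>UNIV. b$k * (N * g k))"
      unfolding sum_subtractf[symmetric] g_def L_def using N0
      by (intro sum.cong) (auto simp: field_simps)
    finally show ?thesis .
  qed
  define B where "B = (\<Sum>k\<in>UNIV. \<bar>b$k\<bar>)"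
  have AyB: "A \<bullet> yt \<le> alpha * N * lm * B"
  proof -
    have "A \<bullet> yt \<le> (\<Sum>k\<in>UNIV. \<bar>b$k\<bar> * (alpha * N * lm))"
      unfolding Ay
    proof (rule sum_mono)
      fix k
      have "b$k * (column k X \<bullet> y) \<le> \<bar>b$k\<bar> * \<bar>column k X \<bullet> y\<bar>" by (simp add: abs_mult[symmetric])
      also have "\<dots> \<le> \<bar>b$k\<bar> * (alpha * N * lm)" using bound[of k] by (simp add: mult_left_mono)
      finally show "b$k * (column k X \<bullet> y) \<le> \<bar>b$k\<bar> * (alpha * N * lm)" .
    qed
    also have "\<dots> = alpha * N * lm * B" unfolding B_def sum_distrib_right[symmetric] by (simp add: ac_simps)
    finally show ?thesis .
  qed
  have ArB: "A \<bullet> rt = N * alpha * lam * B"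
    unfolding Ar B_def
    by (simp add: sum_distrib_left) (metis (no_types, lifting) gs mult.assoc mult.left_commute)
  define Th where "Th = lm *\<^sub>R rt"
  define Ts where "Ts = lam *\<^sub>R yt"
  define d where "d = (lm - lam) *\<^sub>R yt"
  define c0 where "c0 = (xs \<bullet> y) / (N * (1 + L))"
  define dp where "dp = (lm - lam) *\<^sub>R (yt - c0 *\<^sub>R xt jstar)"
  have c0m: "c0 * (N * (1 + L)) = xs \<bullet> y" unfolding c0_def
  proof -
    have dc: "\<And>a D::real. D \<noteq> 0 \<Longrightarrow> a / D * D = a" by simp
    show "xs \<bullet> y / (N * (1 + L)) * (N * (1 + L)) = xs \<bullet> y" by (rule dc) (use NL in linarith)
  qed
  define gg where "gg = s *\<^sub>R xt jstar"
  define c where "c = (lm - lam) * c0 * s"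
  have obt: "inner (Ts + d - Th) (Ts - Th) \<le> 0"
  proof -
    have "Ts + d - Th = lm *\<^sub>R A" unfolding Ts_def d_def Th_def A_def by (simp add: algebra_simps)
    then have "inner (Ts + d - Th) (Ts - Th) = lm * (lam * (A \<bullet> yt) - lm * (A \<bullet> rt))"
      unfolding Ts_def Th_def by (simp add: inner_diff_right algebra_simps)
    also have "\<dots> \<le> 0"
    proof -
      have "lam * (A \<bullet> yt) \<le> lam * (alpha * N * lm * B)" using AyB lam by (simp add: mult_left_mono)
      moreover have "lam * (alpha * N * lm * B) = lm * (A \<bullet> rt)" using ArB by (simp add: ac_simps)
      ultimately have "lam * (A \<bullet> yt) - lm * (A \<bullet> rt) \<le> 0" by linarith
      then show ?thesis using lmpos by (simp add: mult_nonneg_nonpos)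
    qed
    finally show ?thesis .
  qed
  have half: "inner gg (Th - Ts) \<le> 0"
  proof -
    have "inner gg (Th - Ts) = lm * (s * (N * g jstar)) - lam * (s * (xs \<bullet> y))"
      unfolding gg_def Th_def Ts_def by (simp add: inner_diff_right xr xy xs_def algebra_simps)
    also have "\<dots> \<le> lm * (N * (alpha * lam)) - lam * (alpha * N * lm)"
    proof -
      have "s * g jstar \<le> \<bar>g jstar\<bar>" unfolding s_def by (auto simp: sgn_if)
      then have "s * g jstar \<le> alpha * lam" using gk[of jstar] by linarith
      then have "lm * (s * (N * g jstar)) \<le> lm * (N * (alpha * lam))"
        using lmpos N0 by (simp add: mult.left_commute)
      moreover have "lm*(N*(alpha*lam)) = lam*(alpha*N*lm)" by (simp add: ac_simps)
      ultimately show ?thesis by (simp only: sxy)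
    qed
    also have "\<dots> = 0" by (simp add: algebra_simps)
    finally show ?thesis .
  qed
  have dd: "d = c *\<^sub>R gg + dp"
    unfolding d_def c_def gg_def dp_def using s2 by (simp add: algebra_simps)
  have orth: "inner gg dp = 0"
  proof -
    have "inner gg dp = s * (lm - lam) * (xt jstar \<bullet> yt - c0 * (xt jstar \<bullet> xt jstar))"
      unfolding gg_def dp_def by (simp add: inner_diff_right algebra_simps)
    also have "xt jstar \<bullet> yt - c0 * (xt jstar \<bullet> xt jstar) = 0"
      unfolding xy xx using c0m unfolding xs_def by simp
    finally show ?thesis by simp
  qed
  have cpos: "c \<ge> 0"
  proof -
    have "c0 * s = \<bar>xs \<bullet> y\<bar> / (N * (1 + L))" unfolding c0_def s_def by (auto simp: sgn_if abs_if)
    then have "c0 * s \<ge> 0" using N0 L0 by simp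
    moreover have "lm - lam \<ge> 0" using lam unfolding lm_def by simp
    ultimately show ?thesis unfolding c_def by (simp add: mult.assoc)
  qed
  have G: "\<bar>inner (xt j) (2 *\<^sub>R Th)\<bar> \<le> \<bar>inner (xt j) (2 *\<^sub>R Ts + dp)\<bar> + norm (xt j) * norm dp"
    by (rule geo[OF obt half dd orth cpos])
  have lhs: "\<bar>inner (xt j) (2 *\<^sub>R Th)\<bar> = 2 * lm * N * (alpha * lam)"
    unfolding Th_def using xr[of j] gj lmpos N0 by (simp add: abs_mult)
  have c0_eq: "c0 = s * alpha * lm / (1 + L)"
  proof -
    have "c0 = (N * (s * alpha * lm)) / (N * (1 + L))" unfolding c0_def xy_eq by (simp add: ac_simps)
    also have "\<dots> = s * alpha * lm / (1 + L)" using N0 by (simp only: mult_divide_mult_cancel_left_if) simp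
    finally show ?thesis .
  qed
  have mid: "inner (xt j) (2 *\<^sub>R Ts + dp) = (lm + lam) * (column j X \<bullet> y)
      - (lm - lam) * (s * alpha * lm / (1 + L)) * (column j X \<bullet> xs)"
    unfolding Ts_def dp_def c0_eq[symmetric]
    by (simp add: inner_add_right inner_diff_right xy xjs algebra_simps)
  have nrm: "norm (xt j) * norm dp = (lm - lam) * sqrt (N * (norm y)^2 * (1 + L) - N^2 * alpha^2 * lm^2)"
  proof -
    have ny: "yt \<bullet> yt = (norm y)^2" unfolding yt_def by (simp add: power2_norm_eq_inner)
    have "(yt - c0 *\<^sub>R xt jstar) \<bullet> (yt - c0 *\<^sub>R xt jstar) = (norm y)^2 - 2 * c0 * (xs \<bullet> y) + c0^2 * (N * (1 + L))"
      using xy[of jstar] xx[of jstar] ny unfolding xs_def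
      by (simp add: inner_diff_left inner_diff_right inner_commute power2_eq_square algebra_simps)
    also have "\<dots> = (norm y)^2 - (xs \<bullet> y)^2 / (N * (1 + L))"
    proof -
      have gen: "\<And>a D Y::real. D \<noteq> 0 \<Longrightarrow> Y - 2*(a/D)*a + (a/D)^2*D = Y - a^2/D"
        by (simp add: field_simps power2_eq_square)
      show ?thesis unfolding c0_def by (rule gen) (use NL in linarith)
    qed
    finally have e1: "(yt - c0 *\<^sub>R xt jstar) \<bullet> (yt - c0 *\<^sub>R xt jstar) = (norm y)^2 - (xs \<bullet> y)^2 / (N * (1 + L))" .
    have "norm (xt j) * norm dp = \<bar>lm - lam\<bar> * (sqrt (N * (1 + L)) * sqrt ((norm y)^2 - (xs \<bullet> y)^2 / (N * (1 + L))))"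
    proof -
      have n1: "norm (xt j) = sqrt (N * (1 + L))" unfolding norm_eq_sqrt_inner[of "xt j"] xx ..
      have n2: "norm (yt - c0 *\<^sub>R xt jstar) = sqrt ((norm y)^2 - (xs \<bullet> y)^2 / (N * (1 + L)))"
        unfolding norm_eq_sqrt_inner[of "yt - c0 *\<^sub>R xt jstar"] e1 ..
      show ?thesis unfolding dp_def norm_scaleR n1 n2 by (simp add: ac_simps)
    qed
    also have "sqrt (N * (1 + L)) * sqrt ((norm y)^2 - (xs \<bullet> y)^2 / (N * (1 + L)))
        = sqrt (N * (norm y)^2 * (1 + L) - N^2 * alpha^2 * lm^2)"
    proof -
      have e2: "N * (1 + L) * ((norm y)^2 - (xs \<bullet> y)^2 / (N * (1 + L))) = N * (norm y)^2 * (1 + L) - (xs \<bullet> y)^2"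
      proof -
        have gen: "\<And>D Y a::real. D \<noteq> 0 \<Longrightarrow> D * (Y - a / D) = Y * D - a" by (simp add: field_simps)
        show ?thesis by (subst gen) (use NL in \<open>auto simp: ac_simps\<close>)
      qed
      have e3: "(xs \<bullet> y)^2 = N^2 * alpha^2 * lm^2"
        using absxy by (metis power2_abs power_mult_distrib mult.commute mult.left_commute)
      show ?thesis unfolding real_sqrt_mult[symmetric] e2 by (simp only: e3)
    qed
    finally show ?thesis using lam unfolding lm_def by simp
  qed
  have "2 * lm * N * (alpha * lam) < 2 * N * alpha * lam * lm"
    using G lhs mid nrm rule unfolding lm_def N_def L_def s_def xs_def by linarith
  then show False by (simp add: algebra_simps)
qed


end
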